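(* Let $$y=\frac{s^3(2s^2-4s+3)(s^2-2s+2)}{(2s^2-2s+1)(3s^2-4s+2)},\qquad t=\left(\frac{s^2(2s^2-4s+3)}{3s^2-4s+2}\right)^2.$$ Then $y(t)$ is a solution of $\mathrm{P}_{\mathrm{VI}}$ with parameters $(\theta_1,\theta_2,\theta_3,\theta_4)=(1/3,1/4,1/2,2/3)$.
   Context: $\mathrm{P}_{\mathrm{VI}}$ is the equation $$\frac{d^2y}{dt^2}=\frac12\Big(\frac1y+\frac1{y-1}+\frac1{y-t}\Big)\Big(\frac{dy}{dt}\Big)^2-\Big(\frac1t+\frac1{t-1}+\frac1{y-t}\Big)\frac{dy}{dt}+\frac{y(y-1)(y-t)}{t^2(t-1)^2}\Big(\alpha+\beta\frac{t}{y^2}+\gamma\frac{t-1}{(y-1)^2}+\delta\frac{t(t-1)}{(y-t)^2}\Big),$$ with $\alpha=(\theta_4-1)^2/2$, $\beta=-\theta_1^2/2$, $\gamma=\theta_3^2/2$, $\delta=(1-\theta_2^2)/2$. When $y,t$ are given as rational functions of a parameter on a curve, derivatives with respect to $t$ are computed via the chain rule. *)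

theory Defs
  imports "HOL-Analysis.Analysis"
begin

definition PVI_eq :: "complex \<Rightarrow> complex \<Rightarrow> complex \<Rightarrow> complex \<Rightarrow>
    complex \<Rightarrow> complex \<Rightarrow> complex \<Rightarrow> complex \<Rightarrow> bool" where
  "PVI_eq \<theta>1 \<theta>2 \<theta>3 \<theta>4 t y yt ytt \<longleftrightarrow>
    (let \<alpha> = (\<theta>4 - 1)^2 / 2; \<beta> = - (\<theta>1^2) / 2;
         \<gamma> = \<theta>3^2 / 2; \<delta> = (1 - \<theta>2^2) / 2 in
     ytt = (1/2) * (1/y + 1/(y - 1) + 1/(y - t)) * yt^2
           - (1/t + 1/(t - 1) + 1/(y - t)) * yt
           + (y * (y - 1) * (y - t)) / (t^2 * (t - 1)^2)
             * (\<alpha> + \<beta> * t / y^2 + \<gamma> * (t - 1) / (y - 1)^2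
                + \<delta> * t * (t - 1) / (y - t)^2))"

end

theory Submission
  imports Defs
begin

lemma split_lemma:
  fixes y Y1 Yt t T1 a b c d :: complex
  assumes "y \<noteq> 0" "Y1 \<noteq> 0" "Yt \<noteq> 0" "t \<noteq> 0" "T1 \<noteq> 0"
  shows "y * Y1 * Yt / (t^2 * T1^2) * (a + b * t / y^2 + c * T1 / Y1^2 + d * t * T1 / Yt^2)
     = a * (y * Y1 * Yt / (t^2 * T1^2)) + b * (Y1 * Yt / (y * t * T1^2))
       + c * (y * Yt / (t^2 * T1 * Y1)) + d * (y * Y1 / (t * T1 * Yt))"
  using assms by (simp add: field_simps power2_eq_square)

lemma core2:
  fixes s y Y1 Yt t T1 p q a b c d xA xB xE xC xL xM xK xm xn xW xZ :: complex
  assumes nz: "s \<noteq> 0" "xm \<noteq> 0" "xL \<noteq> 0" "xA \<noteq> 0" "xE \<noteq> 0" "xC \<noteq> 0" "xB \<noteq> 0" "xM \<noteq> 0" "xK \<noteq> 0" "xn \<noteq> 0"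
    and hy: "y = s^3 * xA * xB / (xE * xC)"
    and hY1: "Y1 = xM * xL * xm / (xE * xC)"
    and hYt: "Yt = -(s^3 * xL * xA * xK * xm) / (xE * xC^2)"
    and ht: "t = s^4 * xA^2 / xC^2"
    and hT1: "T1 = 4 * xL^2 * xm^3 * xn / xC^2"
    and hp: "p = xC * xW / (648 * s * xL * xA * xE^2 * xm^2)"
    and hq: "q = xZ * xC^3 / (60466176 * s^5 * xL^3 * xA^3 * xE^3 * xm^5)"
    and ha: "a = (2/3 - 1)^2/2" and hb: "b = -((1/3)^2)/2" and hc: "c = (1/2)^2/2" and hd: "d = (1 - (1/4)^2)/2"
    and hxA: "xA = 2 * s^2 - 4 * s + 3" and hxB: "xB = s^2 - 2 * s + 2" and hxE: "xE = 2 * s^2 - 2 * s + 1" and hxC: "xC = 3 * s^2 - 4 * s + 2" and hxL: "xL = s^2 - s + 1" and hxM: "xM = 2 * s^4 - 4 * s^3 + 3 * s^2 - 4 * s + 2" and hxK: "xK = 4 * s^2 - 7 * s + 4" and hxm: "xm = s - 1" and hxn: "xn = s + 1" and hxW: "xW = 972 - 5616 * s + 15552 * s^2 - 26892 * s^3 + 31941 * s^4 - 26892 * s^5 + 15552 * s^6 - 5616 * s^7 + 972 * s^8" and hxZ: "xZ = 22674816 - 309889152 * s + 2103299136 * s^2 - 9250065216 * s^3 + 29255341536 * s^4 - 70324892064 * s^5 + 132891112944 * s^6 - 201765866544 * s^7 + 249650039088 * s^8 - 253888969968 * s^9 + 212956203168 * s^10 - 147032744832 * s^11 + 82824804288 *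 s^12 - 37363897728 * s^13 + 13054815360 * s^14 - 3330678528 * s^15 + 554273280 * s^16 - 45349632 * s^17"
  shows "q = 1/2 * (1/y + 1/Y1 + 1/Yt) * p^2 - (1/t + 1/T1 + 1/Yt) * p
     + (a * (y * Y1 * Yt / (t^2 * T1^2)) + b * (Y1 * Yt / (y * t * T1^2))
       + c * (y * Yt / (t^2 * T1 * Y1)) + d * (y * Y1 / (t * T1 * Yt)))"
proof -
  have Dnz: "s^5 * xA^3 * xB * xE^3 * xL^3 * xM * xK * xm^5 * xn^2 \<noteq> 0" using nz by simp
  have e0: "1/2 * (1/y) * p^2 = (1/839808) * (xC^3 * xL * xM * xK * xm * xn^2 * xW^2) / (s^5 * xA^3 * xB * xE^3 * xL^3 * xM * xK * xm^5 * xn^2)"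
    unfolding hy hY1 hYt ht hT1 hp ha hb hc hd using nz by (simp add: field_simps power_numeral_reduce)
  have e1: "1/2 * (1/Y1) * p^2 = (1/839808) * (s^3 * xA * xB * xC^3 * xK * xn^2 * xW^2) / (s^5 * xA^3 * xB * xE^3 * xL^3 * xM * xK * xm^5 * xn^2)"
    unfolding hy hY1 hYt ht hT1 hp ha hb hc hd using nz by (simp add: field_simps power_numeral_reduce)
  have e2: "1/2 * (1/Yt) * p^2 = (-1/839808) * (xB * xC^4 * xM * xn^2 * xW^2) / (s^5 * xA^3 * xB * xE^3 * xL^3 * xM * xK * xm^5 * xn^2)"
    unfolding hy hY1 hYt ht hT1 hp ha hb hc hd using nz by (simp add: field_simps power_numeral_reduce)
  have e3: "- (1/t) * p = (-1/648) * (xB * xE * xC^3 * xL^2 * xM * xK * xm^3 * xn^2 * xW) / (s^5 * xA^3 * xB * xE^3 * xL^3 * xM * xK * xm^5 * xn^2)"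
    unfolding hy hY1 hYt ht hT1 hp ha hb hc hd using nz by (simp add: field_simps power_numeral_reduce)
  have e4: "- (1/T1) * p = (-1/2592) * (s^4 * xA^2 * xB * xE * xC^3 * xM * xK * xn * xW) / (s^5 * xA^3 * xB * xE^3 * xL^3 * xM * xK * xm^5 * xn^2)"
    unfolding hy hY1 hYt ht hT1 hp ha hb hc hd using nz by (simp add: field_simps power_numeral_reduce)
  have e5: "- (1/Yt) * p = (1/648) * (s * xA * xB * xE^2 * xC^3 * xL * xM * xm^2 * xn^2 * xW) / (s^5 * xA^3 * xB * xE^3 * xL^3 * xM * xK * xm^5 * xn^2)"
    unfolding hy hY1 hYt ht hT1 hp ha hb hc hd using nz by (simp add: field_simps power_numeral_reduce)
  have e6: "a * (y * Y1 * Yt / (t^2 * T1^2)) = (-1/288) * (s^3 * xA * xB^2 * xC^4 * xL * xM^2 * xK^2 * xm) / (s^5 * xA^3 * xB * xE^3 * xL^3 * xM * xK * xm^5 * xn^2)"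
    unfolding hy hY1 hYt ht hT1 hp ha hb hc hd using nz by (simp add: field_simps power_numeral_reduce)
  have e7: "b * (Y1 * Yt / (y * t * T1^2)) = (1/288) * (s * xA * xE^2 * xC^4 * xL * xM^2 * xK^2 * xm) / (s^5 * xA^3 * xB * xE^3 * xL^3 * xM * xK * xm^5 * xn^2)"
    unfolding hy hY1 hYt ht hT1 hp ha hb hc hd using nz by (simp add: field_simps power_numeral_reduce)
  have e8: "c * (y * Yt / (t^2 * T1 * Y1)) = (-1/32) * (s^3 * xA * xB^2 * xE^2 * xC^4 * xL * xK^2 * xm^2 * xn) / (s^5 * xA^3 * xB * xE^3 * xL^3 * xM * xK * xm^5 * xn^2)"
    unfolding hy hY1 hYt ht hT1 hp ha hb hc hd using nz by (simp add: field_simps power_numeral_reduce)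
  have e9: "d * (y * Y1 / (t * T1 * Yt)) = (-15/128) * (s * xA * xB^2 * xE^2 * xC^4 * xL * xM^2 * xm^2 * xn) / (s^5 * xA^3 * xB * xE^3 * xL^3 * xM * xK * xm^5 * xn^2)"
    unfolding hy hY1 hYt ht hT1 hp ha hb hc hd using nz by (simp add: field_simps power_numeral_reduce)
  have e_q: "q = (1/60466176) * (xB * xC^3 * xM * xK * xn^2 * xZ) / (s^5 * xA^3 * xB * xE^3 * xL^3 * xM * xK * xm^5 * xn^2)"
    unfolding hq using nz by (simp add: field_simps power_numeral_reduce)
  have poly: "(1/60466176) * (xB * xC^3 * xM * xK * xn^2 * xZ) = (1/839808) * (xC^3 * xL * xM * xK * xm * xn^2 * xW^2) + (1/839808) * (s^3 * xA * xB * xC^3 * xK * xn^2 * xW^2) + (-1/839808) * (xB * xC^4 * xM * xn^2 * xW^2) + (-1/648) * (xB * xE * xC^3 * xL^2 * xM * xK * xm^3 * xn^2 * xW) + (-1/2592) * (s^4 * xA^2 * xB * xE * xC^3 * xM * xK * xn * xW) + (1/648) * (s * xA * xB * xE^2 * xC^3 * xL * xM * xm^2 * xn^2 * xW) + (-1/288) * (s^3 * xA * xB^2 * xC^4 * xL * xM^2 * xK^2 * xm) + (1/288) * (s * xA * xE^2 * xC^4 * xL * xM^2 * xK^2 * xm) + (-1/32) * (s^3 * xA * xB^2 * xE^2 * xC^4 * xL * xK^2 * xm^2 * xn) + (-15/128) * (s * xA * xB^2 * xE^2 * xC^4 * xL * xM^2 * xm^2 * xn)"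
    unfolding hxA hxB hxE hxC hxL hxM hxK hxm hxn hxW hxZ by algebra
  have sum: "1/2 * (1/y + 1/Y1 + 1/Yt) * p^2 - (1/t + 1/T1 + 1/Yt) * p = 1/2 * (1/y) * p^2 + 1/2 * (1/Y1) * p^2 + 1/2 * (1/Yt) * p^2 + - (1/t) * p + - (1/T1) * p + - (1/Yt) * p"
    by (simp add: algebra_simps)
  show ?thesis
    unfolding sum e0 e1 e2 e3 e4 e5 e6 e7 e8 e9 e_q poly
    by (simp only: add_divide_distrib add.assoc)
qed

lemma Tval_gen:
  fixes F :: "complex \<Rightarrow> complex" and u c h hp cp R :: complex
  assumes "(F has_field_derivative of_nat 2 * ((hp * c - h * cp) / (c * c) * (h / c) ^ (2 - Suc 0))) (at u)"
    and "c \<noteq> 0" and "2 * ((hp * c - h * cp) * h) = R"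
  shows "(F has_field_derivative R / c ^ 3) (at u)"
proof -
  have "of_nat 2 * ((hp * c - h * cp) / (c * c) * (h / c) ^ (2 - Suc 0)) = R / c ^ 3"
    unfolding assms(3)[symmetric] using assms(2) by (simp add: field_simps power3_eq_cube)
  then show ?thesis using assms(1) by simp
qed

lemma GY_gen:
  fixes X1 e c R f g :: complex
  assumes "e \<noteq> 0" "c \<noteq> 0" "R \<noteq> 0" "g \<noteq> 0" "X1 * c * g = f * R * e^2"
  shows "(X1 / ((e * c) * (e * c))) / (R / c ^ 3) = f / g"
proof -
  have "X1 = f * R * e^2 / (c * g)" using assms by (simp add: field_simps)
  then show ?thesis using assms(1-4) by (simp add: field_simps power3_eq_cube power2_eq_square)
qed

lemma q_gen:
  fixes X2 s xZ xE xm xL xA xC :: complex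
  assumes "s \<noteq> 0" "xL \<noteq> 0" "xA \<noteq> 0" "xE \<noteq> 0" "xm \<noteq> 0" "xC \<noteq> 0"
    and "X2 * 6 = xZ * xE * xm"
  shows "X2 / ((648 * s * xL * xA * xE^2 * xm^2) * (648 * s * xL * xA * xE^2 * xm^2)) / (24 * s^3 * xL * xA * xm^2 / xC^3)
     = xZ * xC^3 / (60466176 * s^5 * xL^3 * xA^3 * xE^3 * xm^5)"
proof -
  have "X2 = xZ * xE * xm / 6" using assms(7) by (simp add: field_simps)
  then show ?thesis using assms(1-6) by (simp add: field_simps; algebra)
qed

lemma sub_one_gen:
  fixes n d R :: complex
  assumes "d \<noteq> 0" "n - d = R"
  shows "n / d - 1 = R / d"
  using assms by (simp add: field_simps)

lemma yt_gen:
  fixes xE xC N1 N2 R :: complex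
  assumes "xE \<noteq> 0" "xC \<noteq> 0" "N1 * xC - N2 * xE = R"
  shows "N1 / (xE * xC) - N2 / xC^2 = R / (xE * xC^2)"
  using assms by (simp add: field_simps power2_eq_square)

lemma pd_NY: "((\<lambda>u::complex. u ^ 3 * (2 * u ^ 2 - 4 * u + 3) * (u ^ 2 - 2 * u + 2)) has_field_derivative (18 * u^2 - 56 * u^3 + 75 * u^4 - 48 * u^5 + 14 * u^6)) (at u)"
  by (rule derivative_eq_intros refl)+ (simp; algebra)

lemma pd_DY: "((\<lambda>u::complex. (2 * u ^ 2 - 2 * u + 1) * (3 * u ^ 2 - 4 * u + 2)) has_field_derivative (- 8 + 30 * u - 42 * u^2 + 24 * u^3)) (at u)"
  by (rule derivative_eq_intros refl)+ (simp; algebra)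

lemma pd_hN: "((\<lambda>u::complex. u ^ 2 * (2 * u ^ 2 - 4 * u + 3)) has_field_derivative (6 * u - 12 * u^2 + 8 * u^3)) (at u)"
  by (rule derivative_eq_intros refl)+ (simp; algebra)

lemma pd_C: "((\<lambda>u::complex. (3 * u ^ 2 - 4 * u + 2)) has_field_derivative (- 4 + 6 * u)) (at u)"
  by (rule derivative_eq_intros refl)+ (simp; algebra)

lemma pd_f: "((\<lambda>u::complex. (3 * u ^ 2 - 4 * u + 2) * (972 - 5616 * u + 15552 * u^2 - 26892 * u^3 + 31941 * u^4 - 26892 * u^5 + 15552 * u^6 - 5616 * u^7 + 972 * u^8)) has_field_derivative (- 15120 + 112968 * u - 398520 * u^2 + 872424 * u^3 - 1311120 * u^4 + 1406970 * u^5 - 1078812 * u^6 + 568512 * u^7 - 186624 * u^8 + 29160 * u^9)) (at u)"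
  by (rule derivative_eq_intros refl)+ (simp; algebra)

lemma pd_g: "((\<lambda>u::complex. 648 * u * (u^2 - u + 1) * (2 * u ^ 2 - 4 * u + 3) * (2 * u ^ 2 - 2 * u + 1)^2 * (u - 1)^2) has_field_derivative (1944 - 32400 * u + 198288 * u^2 - 681696 * u^3 + 1526040 * u^4 - 2371680 * u^5 + 2621808 * u^6 - 2052864 * u^7 + 1096416 * u^8 - 362880 * u^9 + 57024 * u^10)) (at u)"
  by (rule derivative_eq_intros refl)+ (simp; algebra)

theorem mainTheorem8:
  fixes Y T :: "complex \<Rightarrow> complex" and s :: complex
  assumes Y_def: "Y = (\<lambda>s. s ^ 3 * (2 * s ^ 2 - 4 * s + 3) * (s ^ 2 - 2 * s + 2)
                       / ((2 * s ^ 2 - 2 * s + 1) * (3 * s ^ 2 - 4 * s + 2)))"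
      and T_def: "T = (\<lambda>s. (s ^ 2 * (2 * s ^ 2 - 4 * s + 3) / (3 * s ^ 2 - 4 * s + 2)) ^ 2)"
      and den: "(2 * s ^ 2 - 2 * s + 1) * (3 * s ^ 2 - 4 * s + 2) \<noteq> 0"
      and dT: "deriv T s \<noteq> 0"
      and t0: "T s \<noteq> 0" and t1: "T s \<noteq> 1"
      and y0: "Y s \<noteq> 0" and y1: "Y s \<noteq> 1" and yt: "Y s \<noteq> T s"
  shows "PVI_eq (1/3) (1/4) (1/2) (2/3) (T s) (Y s)
           (deriv Y s / deriv T s)
           (deriv (\<lambda>u. deriv Y u / deriv T u) s / deriv T s)"
proof -
  have hE: "(2 * s ^ 2 - 2 * s + 1) \<noteq> 0" and hC: "(3 * s ^ 2 - 4 * s + 2) \<noteq> 0" using den by auto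
  have Ts: "T s = s^4 * (2 * s ^ 2 - 4 * s + 3)^2 / (3 * s ^ 2 - 4 * s + 2)^2"
    unfolding T_def power_divide by (simp; algebra)
  have Ys: "Y s = s^3 * (2 * s ^ 2 - 4 * s + 3) * (s ^ 2 - 2 * s + 2) / ((2 * s ^ 2 - 2 * s + 1) * (3 * s ^ 2 - 4 * s + 2))"
    unfolding Y_def by simp
  have T1s: "T s - 1 = 4 * (s^2 - s + 1)^2 * (s - 1)^3 * (s + 1) / (3 * s ^ 2 - 4 * s + 2)^2"
    unfolding Ts by (rule sub_one_gen) (use hC in simp, algebra)
  have Y1s: "Y s - 1 = (2 * s^4 - 4 * s^3 + 3 * s^2 - 4 * s + 2) * (s^2 - s + 1) * (s - 1) / ((2 * s ^ 2 - 2 * s + 1) * (3 * s ^ 2 - 4 * s + 2))"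
    unfolding Ys by (rule sub_one_gen) (use hE hC in simp, algebra)
  have Yts: "Y s - T s = -(s^3 * (s^2 - s + 1) * (2 * s ^ 2 - 4 * s + 3) * (4 * s^2 - 7 * s + 4) * (s - 1)) / ((2 * s ^ 2 - 2 * s + 1) * (3 * s ^ 2 - 4 * s + 2)^2)"
    unfolding Ys Ts by (rule yt_gen[OF hE hC]) algebra
  have s0: "s \<noteq> 0" and A0: "(2 * s ^ 2 - 4 * s + 3) \<noteq> 0" using t0 unfolding Ts by auto
  have T1nz: "T s - 1 \<noteq> 0" using t1 by simp
  have L0: "(s^2 - s + 1) \<noteq> 0" and m0: "(s - 1) \<noteq> 0" and n0: "(s + 1) \<noteq> 0" using T1nz unfolding T1s by auto
  have B0: "(s ^ 2 - 2 * s + 2) \<noteq> 0" using y0 unfolding Ys by auto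
  have Y1nz: "Y s - 1 \<noteq> 0" using y1 by simp
  have M0: "(2 * s^4 - 4 * s^3 + 3 * s^2 - 4 * s + 2) \<noteq> 0" using Y1nz unfolding Y1s by auto
  have Ytnz: "Y s - T s \<noteq> 0" using yt by simp
  have K0: "(4 * s^2 - 7 * s + 4) \<noteq> 0" using Ytnz unfolding Yts by auto
  define SS where "SS = {u::complex. (2 * u ^ 2 - 2 * u + 1) * (3 * u ^ 2 - 4 * u + 2) * u * (u^2 - u + 1) * (2 * u ^ 2 - 4 * u + 3) * (u - 1) \<noteq> 0}"
  have oS: "open SS" unfolding SS_def
    by (rule open_Collect_neq) (intro continuous_intros)+
  have sS: "s \<in> SS" unfolding SS_def using hE hC s0 L0 A0 m0 by simp
  have dY: "(Y has_field_derivative ((18 * u^2 - 56 * u^3 + 75 * u^4 - 48 * u^5 + 14 * u^6) * ((2 * u ^ 2 - 2 * u + 1) * (3 * u ^ 2 - 4 * u + 2)) - u ^ 3 * (2 * u ^ 2 - 4 * u + 3) * (u ^ 2 - 2 * u + 2) * (- 8 + 30 * u - 42 * u^2 + 24 * u^3)) / (((2 * u ^ 2 - 2 * u + 1) * (3 * u ^ 2 - 4 * u + 2)) * ((2 * u ^ 2 - 2 * u + 1) * (3 * u ^ 2 - 4 * u + 2)))) (at u)"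
    if "(2 * u ^ 2 - 2 * u + 1) * (3 * u ^ 2 - 4 * u + 2) \<noteq> 0" for u
    unfolding Y_def by (rule DERIV_divide[OF pd_NY pd_DY that])
  have dTd: "(T has_field_derivative (24 * u^3 * (u^2 - u + 1) * (2 * u ^ 2 - 4 * u + 3) * (u - 1)^2) / (3 * u ^ 2 - 4 * u + 2)^3) (at u)"
    if "(3 * u ^ 2 - 4 * u + 2) \<noteq> 0" for u
    unfolding T_def by (rule Tval_gen[OF DERIV_power[OF DERIV_divide[OF pd_hN pd_C that]] that]) algebra
  define G where "G = (\<lambda>u::complex. (3 * u ^ 2 - 4 * u + 2) * (972 - 5616 * u + 15552 * u^2 - 26892 * u^3 + 31941 * u^4 - 26892 * u^5 + 15552 * u^6 - 5616 * u^7 + 972 * u^8) / (648 * u * (u^2 - u + 1) * (2 * u ^ 2 - 4 * u + 3) * (2 * u ^ 2 - 2 * u + 1)^2 * (u - 1)^2))"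
  have GY: "deriv Y u / deriv T u = G u" if "u \<in> SS" for u
  proof -
    have nz: "(2 * u ^ 2 - 2 * u + 1) \<noteq> 0" "(3 * u ^ 2 - 4 * u + 2) \<noteq> 0" "u \<noteq> 0" "(u^2 - u + 1) \<noteq> 0" "(2 * u ^ 2 - 4 * u + 3) \<noteq> 0" "(u - 1) \<noteq> 0"
      using that unfolding SS_def by auto
    have "(2 * u ^ 2 - 2 * u + 1) * (3 * u ^ 2 - 4 * u + 2) \<noteq> 0" using nz by simp
    note e1 = DERIV_imp_deriv[OF dY[OF this]]
    note e2 = DERIV_imp_deriv[OF dTd[OF nz(2)]]
    show ?thesis unfolding e1 e2 G_def
      by (rule GY_gen) (use nz in simp, use nz in simp, use nz in simp, use nz in simp, algebra)
  qed
  have gnz: "648 * s * (s^2 - s + 1) * (2 * s ^ 2 - 4 * s + 3) * (2 * s ^ 2 - 2 * s + 1)^2 * (s - 1)^2 \<noteq> 0" using s0 L0 A0 hE m0 by simp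
  have dG: "(G has_field_derivative ((- 15120 + 112968 * s - 398520 * s^2 + 872424 * s^3 - 1311120 * s^4 + 1406970 * s^5 - 1078812 * s^6 + 568512 * s^7 - 186624 * s^8 + 29160 * s^9) * (648 * s * (s^2 - s + 1) * (2 * s ^ 2 - 4 * s + 3) * (2 * s ^ 2 - 2 * s + 1)^2 * (s - 1)^2) - (3 * s ^ 2 - 4 * s + 2) * (972 - 5616 * s + 15552 * s^2 - 26892 * s^3 + 31941 * s^4 - 26892 * s^5 + 15552 * s^6 - 5616 * s^7 + 972 * s^8) * (1944 - 32400 * s + 198288 * s^2 - 681696 * s^3 + 1526040 * s^4 - 2371680 * s^5 + 2621808 * s^6 - 2052864 * s^7 + 1096416 * s^8 - 362880 * s^9 + 57024 * s^10))
      / ((648 * s * (s^2 - s + 1) * (2 * s ^ 2 - 4 * s + 3) * (2 * s ^ 2 - 2 * s + 1)^2 * (s - 1)^2) * (648 * s * (s^2 - s + 1) * (2 * s ^ 2 - 4 * s + 3) * (2 * s ^ 2 - 2 * s + 1)^2 * (s - 1)^2))) (at s)"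
    unfolding G_def by (rule DERIV_divide[OF pd_f pd_g gnz])
  have dG2: "((\<lambda>u. deriv Y u / deriv T u) has_field_derivative ((- 15120 + 112968 * s - 398520 * s^2 + 872424 * s^3 - 1311120 * s^4 + 1406970 * s^5 - 1078812 * s^6 + 568512 * s^7 - 186624 * s^8 + 29160 * s^9) * (648 * s * (s^2 - s + 1) * (2 * s ^ 2 - 4 * s + 3) * (2 * s ^ 2 - 2 * s + 1)^2 * (s - 1)^2) - (3 * s ^ 2 - 4 * s + 2) * (972 - 5616 * s + 15552 * s^2 - 26892 * s^3 + 31941 * s^4 - 26892 * s^5 + 15552 * s^6 - 5616 * s^7 + 972 * s^8) * (1944 - 32400 * s + 198288 * s^2 - 681696 * s^3 + 1526040 * s^4 - 2371680 * s^5 + 2621808 * s^6 - 2052864 * s^7 + 1096416 * s^8 - 362880 * s^9 + 57024 * s^10))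
      / ((648 * s * (s^2 - s + 1) * (2 * s ^ 2 - 4 * s + 3) * (2 * s ^ 2 - 2 * s + 1)^2 * (s - 1)^2) * (648 * s * (s^2 - s + 1) * (2 * s ^ 2 - 4 * s + 3) * (2 * s ^ 2 - 2 * s + 1)^2 * (s - 1)^2))) (at s)"
    by (rule has_field_derivative_transform_within_open[OF dG oS sS]) (simp add: GY)
  have dTs: "deriv T s = (24 * s^3 * (s^2 - s + 1) * (2 * s ^ 2 - 4 * s + 3) * (s - 1)^2) / (3 * s ^ 2 - 4 * s + 2)^3"
    by (rule DERIV_imp_deriv[OF dTd[OF hC]])
  have hp: "deriv Y s / deriv T s = (3 * s ^ 2 - 4 * s + 2) * (972 - 5616 * s + 15552 * s^2 - 26892 * s^3 + 31941 * s^4 - 26892 * s^5 + 15552 * s^6 - 5616 * s^7 + 972 * s^8) / (648 * s * (s^2 - s + 1) * (2 * s ^ 2 - 4 * s + 3) * (2 * s ^ 2 - 2 * s + 1)^2 * (s - 1)^2)"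
    using GY[OF sS] unfolding G_def by simp
  have hq: "deriv (\<lambda>u. deriv Y u / deriv T u) s / deriv T s = (22674816 - 309889152 * s + 2103299136 * s^2 - 9250065216 * s^3 + 29255341536 * s^4 - 70324892064 * s^5 + 132891112944 * s^6 - 201765866544 * s^7 + 249650039088 * s^8 - 253888969968 * s^9 + 212956203168 * s^10 - 147032744832 * s^11 + 82824804288 * s^12 - 37363897728 * s^13 + 13054815360 * s^14 - 3330678528 * s^15 + 554273280 * s^16 - 45349632 * s^17) * (3 * s ^ 2 - 4 * s + 2)^3 / (60466176 * s^5 * (s^2 - s + 1)^3 * (2 * s ^ 2 - 4 * s + 3)^3 * (2 * s ^ 2 - 2 * s + 1)^3 * (s - 1)^5)"
    unfolding DERIV_imp_deriv[OF dG2] dTs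
    by (rule q_gen[OF s0 L0 A0 hE m0 hC]) algebra
  note main = core2[OF s0 m0 L0 A0 hE hC B0 M0 K0 n0 Ys Y1s Yts Ts T1s hp hq refl refl refl refl
      refl refl refl refl refl refl refl refl refl refl refl]
  show ?thesis
    unfolding PVI_eq_def Let_def split_lemma[OF y0 Y1nz Ytnz t0 T1nz]
    by (rule main)
qed

end
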